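(* Let $R$ be a commutative associative ring with unit element, let $a,b\in R$, and let $m\ge 1$ be an integer. Let $T_{a,b}$ be the symmetric $2m\times 2m$ matrix over $R$ whose diagonal entries are $0$, whose entries in positions $(i,i+1)$ and $(i+1,i)$ ($1\le i\le 2m-1$) are equal to $a$, and all of whose other entries are equal to $b$. Then, with the convention $0^0=1$, $$\mathrm{Hf}(T_{a,b})=\sum_{k=0}^{m}(a-b)^{m-k}\,b^{k}\,\frac{(m+k)!}{k!\,(m-k)!\,2^{k}}.$$ (Here each coefficient $\frac{(m+k)!}{k!(m-k)!2^k}$ is a positive integer, acting on $R$ by repeated addition.)
   Context: For a symmetric matrix $A=(a_{ij})$ of order $n=2m$ over a commutative ring, the hafnian is $\mathrm{Hf}(A)=\sum a_{i_1i_2}a_{i_3i_4}\cdots a_{i_{n-1}i_n}$, where the sum runs over all partitions of $\{1,\dots,n\}$ into $m$ disjoint unordered pairs $\{i_1,i_2\},\dots,\{i_{n-1},i_n\}$ (each partition counted once, irrespective of the order of the pairs and of the elements within each pair). Diagonal entries do not enter the definition. The hafnian of the empty ($0\times 0$) matrix is $1$. *)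

theory Defs
  imports Main
begin

definition perfect_matchings :: "'a set \<Rightarrow> 'a set set set" where
  "perfect_matchings S =
     {M. (\<forall>e\<in>M. e \<subseteq> S \<and> card e = 2) \<and> (\<forall>x\<in>S. \<exists>!e. e \<in> M \<and> x \<in> e)}"

text \<open>Hafnian of an n x n matrix with entries A i j, indices 0..n-1 (n even in the paper;
  for odd n there are no perfect matchings and the sum is 0).\<close>
definition hafnian :: "nat \<Rightarrow> (nat \<Rightarrow> nat \<Rightarrow> 'a::comm_ring_1) \<Rightarrow> 'a" where
  "hafnian n A = (\<Sum>M\<in>perfect_matchings {0..<n}. \<Prod>e\<in>M. A (Min e) (Max e))"

definition T_mat :: "'a::comm_ring_1 \<Rightarrow> 'a \<Rightarrow> nat \<Rightarrow> nat \<Rightarrow> 'a" where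
  "T_mat a b i j = (if i = j then 0 else if i + 1 = j \<or> j + 1 = i then a else b)"

end

theory Submission
  imports Defs
begin


lemma pm_finite: "finite X \<Longrightarrow> finite (perfect_matchings X)"
proof -
  assume f: "finite X"
  have "perfect_matchings X \<subseteq> Pow (Pow X)" unfolding perfect_matchings_def by auto
  moreover have "finite (Pow (Pow X))" using f by simp
  ultimately show ?thesis by (rule finite_subset)
qed

lemma pm_edge: "M \<in> perfect_matchings X \<Longrightarrow> e \<in> M \<Longrightarrow> e \<subseteq> X \<and> card e = 2"
  unfolding perfect_matchings_def by auto

lemma pm_uniq: "M \<in> perfect_matchings X \<Longrightarrow> e \<in> M \<Longrightarrow> f \<in> M \<Longrightarrow> x \<in> e \<Longrightarrow> x \<in> f \<Longrightarrow> e = f"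
  unfolding perfect_matchings_def by blast

lemma pm_cover: "M \<in> perfect_matchings X \<Longrightarrow> x \<in> X \<Longrightarrow> \<exists>e\<in>M. x \<in> e"
  unfolding perfect_matchings_def by blast

lemma pm_Union: "M \<in> perfect_matchings X \<Longrightarrow> \<Union>M = X"
proof
  assume M: "M \<in> perfect_matchings X"
  show "\<Union>M \<subseteq> X" using pm_edge[OF M] by blast
  show "X \<subseteq> \<Union>M" using pm_cover[OF M] by blast
qed

lemma pm_card: assumes "finite X" "M \<in> perfect_matchings X" shows "card X = 2 * card M"
proof -
  have "card (\<Union>M) = sum card M"
  proof (rule card_Union_disjoint)
    show "pairwise disjnt M" unfolding pairwise_def disjnt_def using pm_uniq[OF assms(2)] by blast
    fix A assume "A \<in> M"
    then have "A \<subseteq> X" using pm_edge[OF assms(2)] by blast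
    then show "finite A" using assms(1) by (rule finite_subset)
  qed
  also have "\<dots> = sum (\<lambda>_. 2) M" using pm_edge[OF assms(2)] by simp
  finally show ?thesis using pm_Union[OF assms(2)] by simp
qed

definition pmatch :: "'a set \<Rightarrow> 'a set set \<Rightarrow> bool" where
  "pmatch X S \<longleftrightarrow> (\<forall>e\<in>S. e \<subseteq> X \<and> card e = 2) \<and> (\<forall>e\<in>S. \<forall>f\<in>S. e \<noteq> f \<longrightarrow> e \<inter> f = {})"

lemma pmatch_disj: "pmatch X S \<Longrightarrow> e \<in> S \<Longrightarrow> f \<in> S \<Longrightarrow> x \<in> f \<Longrightarrow> x \<in> e \<Longrightarrow> f = e"
  unfolding pmatch_def by blast

lemma pm_ext_image:
  assumes "pmatch X S"
  shows "{M \<in> perfect_matchings X. S \<subseteq> M} = (\<lambda>N. N \<union> S) ` perfect_matchings (X - \<Union>S)"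
proof
  show "{M \<in> perfect_matchings X. S \<subseteq> M} \<subseteq> (\<lambda>N. N \<union> S) ` perfect_matchings (X - \<Union>S)"
  proof
    fix M assume M: "M \<in> {M \<in> perfect_matchings X. S \<subseteq> M}"
    then have MP: "M \<in> perfect_matchings X" and SM: "S \<subseteq> M" by auto
    have "M - S \<in> perfect_matchings (X - \<Union>S)"
      unfolding perfect_matchings_def
    proof (intro CollectI conjI ballI)
      fix e assume e: "e \<in> M - S"
      then have "e \<inter> \<Union>S = {}" using pm_uniq[OF MP] SM by blast
      then show "e \<subseteq> X - \<Union>S" using pm_edge[OF MP] e by blast
      show "card e = 2" using pm_edge[OF MP] e by blast
    next
      fix x assume x: "x \<in> X - \<Union>S"
      then obtain e where e: "e \<in> M" "x \<in> e" using pm_cover[OF MP] by blast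
      have "e \<notin> S" using x e by blast
      show "\<exists>!e. e \<in> M - S \<and> x \<in> e"
      proof (rule ex1I[of _ e])
        show "e \<in> M - S \<and> x \<in> e" using e \<open>e \<notin> S\<close> by blast
        show "\<And>f. f \<in> M - S \<and> x \<in> f \<Longrightarrow> f = e" using pm_uniq[OF MP] e by blast
      qed
    qed
    moreover have "M = (M - S) \<union> S" using SM by blast
    ultimately show "M \<in> (\<lambda>N. N \<union> S) ` perfect_matchings (X - \<Union>S)" by blast
  qed
next
  show "(\<lambda>N. N \<union> S) ` perfect_matchings (X - \<Union>S) \<subseteq> {M \<in> perfect_matchings X. S \<subseteq> M}"
  proof
    fix M assume "M \<in> (\<lambda>N. N \<union> S) ` perfect_matchings (X - \<Union>S)"
    then obtain N where N: "N \<in> perfect_matchings (X - \<Union>S)" and MN: "M = N \<union> S" by blast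
    have "M \<in> perfect_matchings X" unfolding perfect_matchings_def
    proof (intro CollectI conjI ballI)
      fix e assume "e \<in> M"
      then have "e \<in> N \<or> e \<in> S" using MN by blast
      then show "e \<subseteq> X" "card e = 2" using pm_edge[OF N] assms unfolding pmatch_def by blast+
    next
      fix x assume x: "x \<in> X"
      show "\<exists>!e. e \<in> M \<and> x \<in> e"
      proof (cases "x \<in> \<Union>S")
        case True
        then obtain e where e: "e \<in> S" "x \<in> e" by blast
        have "\<And>f. f \<in> M \<Longrightarrow> x \<in> f \<Longrightarrow> f = e"
        proof -
          fix f assume f: "f \<in> M" "x \<in> f"
          show "f = e"
          proof (cases "f \<in> S")
            case True show ?thesis by (rule pmatch_disj[OF assms e(1) True f(2) e(2)])
          next
            case False then have "f \<in> N" using f MN by blast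
            then show ?thesis using pm_edge[OF N] f True by blast
          qed
        qed
        then show ?thesis using e MN by (intro ex1I[of _ e]) auto
      next
        case False
        then obtain e where e: "e \<in> N" "x \<in> e" using pm_cover[OF N] x by blast
        have "\<And>f. f \<in> M \<Longrightarrow> x \<in> f \<Longrightarrow> f = e"
          using False MN pm_uniq[OF N] e by blast
        then show ?thesis using e MN by (intro ex1I[of _ e]) auto
      qed
    qed
    then show "M \<in> {M \<in> perfect_matchings X. S \<subseteq> M}" using MN by blast
  qed
qed

lemma pm_ext_card:
  assumes "pmatch X S"
  shows "card {M \<in> perfect_matchings X. S \<subseteq> M} = card (perfect_matchings (X - \<Union>S))"
proof -
  have "inj_on (\<lambda>N. N \<union> S) (perfect_matchings (X - \<Union>S))"
  proof (rule inj_onI)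
    fix N1 N2 assume N1: "N1 \<in> perfect_matchings (X - \<Union>S)" and N2: "N2 \<in> perfect_matchings (X - \<Union>S)"
      and eq: "N1 \<union> S = N2 \<union> S"
    have d: "N \<inter> S = {}" if N: "N \<in> perfect_matchings (X - \<Union>S)" for N
    proof -
      have "e \<notin> S" if "e \<in> N" for e
      proof -
        have "card e = 2" "e \<subseteq> X - \<Union>S" using pm_edge[OF N that] by auto
        then have "e \<noteq> {}" by auto
        then show ?thesis using \<open>e \<subseteq> X - \<Union>S\<close> by blast
      qed
      then show ?thesis by blast
    qed
    have "N1 = (N1 \<union> S) - S" using d[OF N1] by blast
    also have "\<dots> = (N2 \<union> S) - S" using eq by simp
    also have "\<dots> = N2" using d[OF N2] by blast
    finally show "N1 = N2" .
  qed
  then show ?thesis unfolding pm_ext_image[OF assms] by (rule card_image)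
qed


fun pmc :: "nat \<Rightarrow> nat" where
  "pmc 0 = 1" | "pmc (Suc 0) = 0" | "pmc (Suc (Suc n)) = Suc n * pmc n"

lemma pm_empty: "perfect_matchings {} = {{}}"
  unfolding perfect_matchings_def by auto

lemma pm_count: "finite X \<Longrightarrow> card (perfect_matchings X) = pmc (card X)"
proof (induct "card X" arbitrary: X rule: less_induct)
  case less
  show ?case
  proof (cases "X = {}")
    case True then show ?thesis by (simp add: pm_empty)
  next
    case False
    then obtain x where x: "x \<in> X" by auto
    define A where "A y = {M \<in> perfect_matchings X. {{x,y}} \<subseteq> M}" for y
    have cover: "perfect_matchings X = (\<Union>y\<in>X-{x}. A y)"
    proof
      show "perfect_matchings X \<subseteq> (\<Union>y\<in>X-{x}. A y)"
      proof
        fix M assume M: "M \<in> perfect_matchings X"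
        obtain e where e: "e \<in> M" "x \<in> e" using pm_cover[OF M x] by blast
        then have "card e = 2" "e \<subseteq> X" using pm_edge[OF M] by auto
        then obtain u v where uv: "e = {u,v}" "u \<noteq> v" by (meson card_2_iff)
        have "\<exists>y. e = {x,y} \<and> y \<noteq> x"
        proof (cases "x = u")
          case True then show ?thesis using uv by blast
        next
          case False then have "x = v" using e(2) uv by simp
          then show ?thesis using uv by (intro exI[of _ u]) auto
        qed
        then obtain y where y: "e = {x,y}" "y \<noteq> x" by blast
        then have "y \<in> X - {x}" using \<open>e \<subseteq> X\<close> by blast
        moreover have "M \<in> A y" using M e y unfolding A_def by simp
        ultimately show "M \<in> (\<Union>y\<in>X-{x}. A y)" by blast
      qed
      show "(\<Union>y\<in>X-{x}. A y) \<subseteq> perfect_matchings X" unfolding A_def by auto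
    qed
    have "card (perfect_matchings X) = (\<Sum>y\<in>X-{x}. card (A y))"
      unfolding cover
    proof (rule card_UN_disjoint)
      show "finite (X - {x})" using less by simp
      show "\<forall>i\<in>X - {x}. finite (A i)" using pm_finite[OF less(2)] unfolding A_def by simp
      show "\<forall>i\<in>X - {x}. \<forall>j\<in>X - {x}. i \<noteq> j \<longrightarrow> A i \<inter> A j = {}"
      proof (intro ballI impI)
        fix i j assume "i \<in> X - {x}" "j \<in> X - {x}" "i \<noteq> j"
        show "A i \<inter> A j = {}"
        proof (rule ccontr)
          assume "A i \<inter> A j \<noteq> {}"
          then obtain M where "M \<in> A i" "M \<in> A j" by blast
          then have "M \<in> perfect_matchings X" "{x,i} \<in> M" "{x,j} \<in> M" unfolding A_def by auto
          then have "{x,i} = {x,j}" using pm_uniq[of M X "{x,i}" "{x,j}" x] by simp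
          then show False using \<open>i \<noteq> j\<close> \<open>i \<in> X - {x}\<close> \<open>j \<in> X - {x}\<close> by (auto simp: doubleton_eq_iff)
        qed
      qed
    qed
    also have "\<dots> = (\<Sum>y\<in>X-{x}. pmc (card X - 2))"
    proof (rule sum.cong[OF refl])
      fix y assume y: "y \<in> X - {x}"
      have pm: "pmatch X {{x,y}}" unfolding pmatch_def using x y by auto
      have e1: "card (A y) = card (perfect_matchings (X - \<Union>{{x,y}}))"
        unfolding A_def by (rule pm_ext_card[OF pm])
      have "card (A y) = card (perfect_matchings (X - {x,y}))" using e1 by simp
      also have "\<dots> = pmc (card (X - {x,y}))"
      proof (rule less(1))
        show "finite (X - {x,y})" using less by simp
        have "card (X - {x,y}) = card X - 2" using x y less(2) by (auto simp: card_Diff_subset)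
        moreover have "card X \<ge> 2"
        proof -
          have "{x,y} \<subseteq> X" using x y by blast
          then have "card {x,y} \<le> card X" using less(2) by (rule card_mono[rotated])
          then show ?thesis using y by auto
        qed
        ultimately show "card (X - {x,y}) < card X" by simp
      qed
      also have "card (X - {x,y}) = card X - 2" using x y less(2) by (auto simp: card_Diff_subset)
      finally show "card (A y) = pmc (card X - 2)" .
    qed
    also have "\<dots> = (card X - 1) * pmc (card X - 2)" using x less(2) by simp
    also have "\<dots> = pmc (card X)"
    proof -
      have "card X \<noteq> 0" using x less(2) by auto
      then obtain k where k: "card X = Suc k" using not0_implies_Suc by blast
      show ?thesis by (cases k) (simp_all add: k)
    qed
    finally show ?thesis .
  qed
qed



definition NC :: "nat \<Rightarrow> nat \<Rightarrow> nat set set" where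
  "NC n j = {I. I \<subseteq> {..<n} \<and> card I = j \<and> (\<forall>i\<in>I. Suc i \<notin> I)}"

lemma NC_finite: "finite (NC n j)"
proof -
  have "NC n j \<subseteq> Pow {..<n}" unfolding NC_def by auto
  moreover have "finite (Pow {..<n})" by simp
  ultimately show ?thesis by (rule finite_subset)
qed

lemma NC_0: "NC n 0 = {{}}"
proof
  show "NC n 0 \<subseteq> {{}}"
  proof
    fix I assume "I \<in> NC n 0"
    then have "I \<subseteq> {..<n}" "card I = 0" unfolding NC_def by auto
    moreover then have "finite I" using finite_subset by blast
    ultimately show "I \<in> {{}}" by simp
  qed
  show "{{}} \<subseteq> NC n 0" unfolding NC_def by simp
qed

lemma NC_step: "NC (Suc (Suc n)) (Suc j) = NC (Suc n) (Suc j) \<union> insert (Suc n) ` NC n j"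
proof
  show "NC (Suc (Suc n)) (Suc j) \<subseteq> NC (Suc n) (Suc j) \<union> insert (Suc n) ` NC n j"
  proof
    fix I assume I: "I \<in> NC (Suc (Suc n)) (Suc j)"
    then have sub: "I \<subseteq> {..<Suc (Suc n)}" and c: "card I = Suc j" and nc: "\<forall>i\<in>I. Suc i \<notin> I"
      unfolding NC_def by auto
    have fI: "finite I" using sub finite_subset by blast
    show "I \<in> NC (Suc n) (Suc j) \<union> insert (Suc n) ` NC n j"
    proof (cases "Suc n \<in> I")
      case False
      then have "I \<subseteq> {..<Suc n}" using sub by (auto simp: less_Suc_eq)
      then have "I \<in> NC (Suc n) (Suc j)" using c nc unfolding NC_def by auto
      then show ?thesis by blast
    next
      case True
      then have "n \<notin> I" using nc by blast
      then have "I - {Suc n} \<subseteq> {..<n}" using sub by (auto simp: less_Suc_eq)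
      moreover have "card (I - {Suc n}) = j" using c True fI by simp
      moreover have "\<forall>i\<in>I - {Suc n}. Suc i \<notin> I - {Suc n}" using nc by blast
      ultimately have "I - {Suc n} \<in> NC n j" unfolding NC_def by blast
      moreover have "I = insert (Suc n) (I - {Suc n})" using True by blast
      ultimately show ?thesis by blast
    qed
  qed
  show "NC (Suc n) (Suc j) \<union> insert (Suc n) ` NC n j \<subseteq> NC (Suc (Suc n)) (Suc j)"
  proof
    fix I assume "I \<in> NC (Suc n) (Suc j) \<union> insert (Suc n) ` NC n j"
    then show "I \<in> NC (Suc (Suc n)) (Suc j)"
    proof
      assume "I \<in> NC (Suc n) (Suc j)"
      then show ?thesis unfolding NC_def by auto
    next
      assume "I \<in> insert (Suc n) ` NC n j"
      then obtain J where J: "J \<in> NC n j" and IJ: "I = insert (Suc n) J" by blast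
      then have sub: "J \<subseteq> {..<n}" and c: "card J = j" and nc: "\<forall>i\<in>J. Suc i \<notin> J"
        unfolding NC_def by auto
      have fJ: "finite J" using sub finite_subset by blast
      have nJ: "Suc n \<notin> J" using sub by auto
      have "I \<subseteq> {..<Suc (Suc n)}" using sub IJ by auto
      moreover have "card I = Suc j" using IJ fJ nJ c by simp
      moreover have "\<forall>i\<in>I. Suc i \<notin> I"
      proof
        fix i assume "i \<in> I"
        then have "i = Suc n \<or> i \<in> J" using IJ by blast
        then show "Suc i \<notin> I"
        proof
          assume "i = Suc n" then show ?thesis using IJ sub by auto
        next
          assume iJ: "i \<in> J"
          then have "i < n" using sub by auto
          then show ?thesis using IJ nc iJ by auto
        qed
      qed
      ultimately show ?thesis unfolding NC_def by blast
    qed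
  qed
qed

lemma induct_two:
  assumes "P 0" "P (Suc 0)" "\<And>n. P n \<Longrightarrow> P (Suc n) \<Longrightarrow> P (Suc (Suc n))"
  shows "P n"
proof -
  have "P n \<and> P (Suc n)" by (induct n) (use assms in auto)
  then show ?thesis by simp
qed

lemma NC_card: "card (NC n j) = (Suc n - j) choose j"
proof (induct n arbitrary: j rule: induct_two)
  case 1
  show ?case
  proof (cases j)
    case 0 then show ?thesis by (simp add: NC_0)
  next
    case (Suc j')
    have "NC 0 j = {}" unfolding NC_def using Suc by auto
    then show ?thesis using Suc by (cases j') auto
  qed
next
  case 2
  show ?case
  proof (cases j)
    case 0 then show ?thesis by (simp add: NC_0)
  next
    case (Suc j')
    show ?thesis
    proof (cases j')
      case 0
      have "NC (Suc 0) j = {{0}}"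
      proof
        show "NC (Suc 0) j \<subseteq> {{0}}"
        proof
          fix I assume "I \<in> NC (Suc 0) j"
          then have "I \<subseteq> {0}" "card I = 1" unfolding NC_def using Suc 0 by auto
          then show "I \<in> {{0}}" by (metis card_1_singletonE insert_subset singletonD singletonI)
        qed
        show "{{0}} \<subseteq> NC (Suc 0) j" unfolding NC_def using Suc 0 by auto
      qed
      then show ?thesis using Suc 0 by simp
    next
      case (Suc j'')
      have "NC (Suc 0) j = {}"
      proof (rule ccontr)
        assume "NC (Suc 0) j \<noteq> {}"
        then obtain I where "I \<in> NC (Suc 0) j" by blast
        then have "I \<subseteq> {0}" "card I = j" unfolding NC_def by auto
        then have "j \<le> 1" using card_mono[of "{0::nat}" I] by simp
        then show False using \<open>j = Suc j'\<close> Suc by simp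
      qed
      then show ?thesis using \<open>j = Suc j'\<close> Suc by simp
    qed
  qed
next
  case (3 n)
  show ?case
  proof (cases j)
    case 0 then show ?thesis by (simp add: NC_0)
  next
    case (Suc j')
    have disj: "NC (Suc n) (Suc j') \<inter> insert (Suc n) ` NC n j' = {}"
      unfolding NC_def by auto
    have inj: "inj_on (insert (Suc n)) (NC n j')"
    proof (rule inj_onI)
      fix I J assume "I \<in> NC n j'" "J \<in> NC n j'" "insert (Suc n) I = insert (Suc n) J"
      moreover then have "Suc n \<notin> I" "Suc n \<notin> J" unfolding NC_def by auto
      ultimately show "I = J" by (metis insert_ident)
    qed
    have "card (NC (Suc (Suc n)) j) = card (NC (Suc n) (Suc j')) + card (insert (Suc n) ` NC n j')"
      unfolding Suc NC_step by (rule card_Un_disjoint[OF NC_finite finite_imageI[OF NC_finite] disj])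
    also have "\<dots> = ((Suc (Suc n) - Suc j') choose (Suc j')) + ((Suc n - j') choose j')"
      using 3(1)[of j'] 3(2)[of "Suc j'"] card_image[OF inj] by simp
    also have "\<dots> = (Suc (Suc (Suc n)) - j) choose j"
    proof (cases "j' \<le> Suc n")
      case True
      then have "Suc (Suc n) - j' = Suc (Suc n - j')" by simp
      then show ?thesis using Suc True by (simp add: add.commute)
    next
      case False
      then show ?thesis using Suc by simp
    qed
    finally show ?thesis .
  qed
qed



lemma pmc_fact: "pmc (2*k) * fact k * 2^k = (fact (2*k) :: nat)"
proof (induct k)
  case 0 then show ?case by simp
next
  case (Suc k)
  have e: "2 * Suc k = Suc (Suc (2*k))" by simp
  have "pmc (2 * Suc k) * fact (Suc k) * 2 ^ Suc k
      = (Suc (2*k) * (2 * Suc k)) * (pmc (2*k) * fact k * 2^k)"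
    unfolding e by (simp add: algebra_simps)
  also have "\<dots> = (Suc (2*k) * (2 * Suc k)) * fact (2*k)" using Suc by simp
  also have "\<dots> = fact (2 * Suc k)" unfolding e by (simp add: algebra_simps)
  finally show ?case .
qed

lemma coef_eq: "fact (j + 2*k) div (fact k * fact j * 2^k) = ((j + 2*k) choose j) * pmc (2*k)"
proof -
  have "fact j * fact (j + 2*k - j) * ((j + 2*k) choose j) = (fact (j + 2*k) :: nat)"
    by (rule binomial_fact_lemma) simp
  then have "fact (j + 2*k) = fact j * fact (2*k) * ((j + 2*k) choose j)" by simp
  also have "\<dots> = fact j * (pmc (2*k) * fact k * 2^k) * ((j + 2*k) choose j)" 
    by (simp only: pmc_fact)
  also have "\<dots> = (((j + 2*k) choose j) * pmc (2*k)) * (fact k * fact j * 2^k)"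
    by (simp only: ac_simps)
  finally have "fact (j + 2*k) = (((j + 2*k) choose j) * pmc (2*k)) * (fact k * fact j * 2^k)" .
  moreover have "fact k * fact j * 2^k \<noteq> (0::nat)" by simp
  ultimately show ?thesis by simp
qed

lemma pmatch_Union_card:
  assumes "finite X" "pmatch X S"
  shows "finite S" "card (\<Union>S) = 2 * card S"
proof -
  have "S \<subseteq> Pow X" using assms(2) unfolding pmatch_def by auto
  moreover have "finite (Pow X)" using assms(1) by simp
  ultimately show fS: "finite S" by (rule finite_subset)
  have "card (\<Union>S) = sum card S"
  proof (rule card_Union_disjoint)
    show "pairwise disjnt S" using assms(2) unfolding pairwise_def disjnt_def pmatch_def by blast
    fix A assume "A \<in> S"
    then have "A \<subseteq> X" using assms(2) unfolding pmatch_def by blast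
    then show "finite A" using assms(1) by (rule finite_subset)
  qed
  also have "\<dots> = sum (\<lambda>_. 2) S"
    by (rule sum.cong[OF refl]) (use assms(2) in \<open>simp add: pmatch_def\<close>)
  finally show "card (\<Union>S) = 2 * card S" by simp
qed

lemma pm_sub_pmatch: "M \<in> perfect_matchings X \<Longrightarrow> S \<subseteq> M \<Longrightarrow> pmatch X S"
proof -
  assume M: "M \<in> perfect_matchings X" and SM: "S \<subseteq> M"
  show "pmatch X S" unfolding pmatch_def
  proof (intro conjI ballI impI)
    fix e assume "e \<in> S"
    then have "e \<in> M" using SM by blast
    then show "e \<subseteq> X" "card e = 2" using pm_edge[OF M] by auto
  next
    fix e f assume ef: "e \<in> S" "f \<in> S" "e \<noteq> f"
    show "e \<inter> f = {}"
    proof (rule ccontr)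
      assume "e \<inter> f \<noteq> {}"
      then obtain x where "x \<in> e" "x \<in> f" by blast
      then have "e = f" using pm_uniq[OF M, of e f x] ef SM by blast
      then show False using ef by simp
    qed
  qed
qed

definition E :: "nat \<Rightarrow> nat set" where "E i = {i, Suc i}"

lemma E_inj: "inj E"
proof (rule injI)
  fix i j assume "E i = E j"
  then have "i \<in> {j, Suc j}" "Suc i \<in> {j, Suc j}" unfolding E_def by (auto dest: equalityD1)
  then show "i = j" by auto
qed

lemma T_edge:
  fixes a b :: "'a::comm_ring_1"
  assumes "e \<subseteq> {0..<n}" "card e = 2"
  shows "T_mat a b (Min e) (Max e) = (if e \<in> E ` {..<n-1} then a - b else 0) + b"
proof -
  obtain u v where uv: "e = {u,v}" "u \<noteq> v" using assms(2) by (meson card_2_iff)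
  define p where "p = min u v"
  define q where "q = max u v"
  have pq: "p < q" "e = {p,q}" using uv unfolding p_def q_def by (auto simp: min_def max_def insert_commute)
  have mm: "Min e = p" "Max e = q" using pq by auto
  have qn: "q < n" using assms(1) pq by auto
  have iff: "e \<in> E ` {..<n-1} \<longleftrightarrow> q = Suc p"
  proof
    assume "e \<in> E ` {..<n-1}"
    then obtain i where "e = {i, Suc i}" unfolding E_def by blast
    then have "Min e = i" "Max e = Suc i" by auto
    then show "q = Suc p" using mm by simp
  next
    assume "q = Suc p"
    then have "e = E p" "p < n - 1" using pq qn unfolding E_def by auto
    then show "e \<in> E ` {..<n-1}" by blast
  qed
  show ?thesis unfolding mm T_mat_def iff using pq by auto
qed



lemma D_eq:
  "{S. S \<subseteq> E ` {..<N} \<and> pmatch {0..<Suc N} S \<and> card S = j} = (\<lambda>I. E ` I) ` NC N j"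
proof
  show "{S. S \<subseteq> E ` {..<N} \<and> pmatch {0..<Suc N} S \<and> card S = j} \<subseteq> (\<lambda>I. E ` I) ` NC N j"
  proof
    fix S assume "S \<in> {S. S \<subseteq> E ` {..<N} \<and> pmatch {0..<Suc N} S \<and> card S = j}"
    then have SE: "S \<subseteq> E ` {..<N}" and pm: "pmatch {0..<Suc N} S" and c: "card S = j" by auto
    define I where "I = {i \<in> {..<N}. E i \<in> S}"
    have SI: "S = E ` I"
    proof
      show "S \<subseteq> E ` I"
      proof
        fix e assume "e \<in> S"
        then obtain i where "i \<in> {..<N}" "e = E i" using SE by blast
        then show "e \<in> E ` I" unfolding I_def using \<open>e \<in> S\<close> by blast
      qed
      show "E ` I \<subseteq> S" unfolding I_def by blast
    qed
    have "I \<subseteq> {..<N}" unfolding I_def by blast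
    moreover have "card I = j" using c SI card_image[OF inj_on_subset[OF E_inj subset_UNIV]] by simp
    moreover have "\<forall>i\<in>I. Suc i \<notin> I"
    proof (intro ballI notI)
      fix i assume "i \<in> I" "Suc i \<in> I"
      then have "E i \<in> S" "E (Suc i) \<in> S" unfolding I_def by auto
      moreover have "Suc i \<in> E i" "Suc i \<in> E (Suc i)" unfolding E_def by auto
      ultimately have "E (Suc i) = E i" using pmatch_disj[OF pm] by blast
      then show False using E_inj by (simp add: inj_eq)
    qed
    ultimately have "I \<in> NC N j" unfolding NC_def by blast
    then show "S \<in> (\<lambda>I. E ` I) ` NC N j" using SI by blast
  qed
  show "(\<lambda>I. E ` I) ` NC N j \<subseteq> {S. S \<subseteq> E ` {..<N} \<and> pmatch {0..<Suc N} S \<and> card S = j}"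
  proof
    fix S assume "S \<in> (\<lambda>I. E ` I) ` NC N j"
    then obtain I where I: "I \<in> NC N j" and SI: "S = E ` I" by blast
    then have sub: "I \<subseteq> {..<N}" and c: "card I = j" and nc: "\<forall>i\<in>I. Suc i \<notin> I"
      unfolding NC_def by auto
    have "S \<subseteq> E ` {..<N}" using SI sub by blast
    moreover have "pmatch {0..<Suc N} S" unfolding pmatch_def
    proof (intro conjI ballI impI)
      fix e assume "e \<in> S"
      then obtain i where "i \<in> I" "e = E i" using SI by blast
      then have "i < N" "e = {i, Suc i}" using sub unfolding E_def by auto
      then show "e \<subseteq> {0..<Suc N}" "card e = 2" by auto
    next
      fix e f assume "e \<in> S" "f \<in> S" "e \<noteq> f"
      then obtain i i' where ii: "i \<in> I" "e = E i" "i' \<in> I" "f = E i'" using SI by blast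
      then have "i \<noteq> i'" using \<open>e \<noteq> f\<close> by blast
      have "Suc i \<noteq> i'" "Suc i' \<noteq> i" using nc ii by blast+
      then show "e \<inter> f = {}" using ii \<open>i \<noteq> i'\<close> unfolding E_def by auto
    qed
    moreover have "card S = j" using c SI card_image[OF inj_on_subset[OF E_inj subset_UNIV]] by simp
    ultimately show "S \<in> {S. S \<subseteq> E ` {..<N} \<and> pmatch {0..<Suc N} S \<and> card S = j}" by blast
  qed
qed

lemma D_card:
  "card {S. S \<subseteq> E ` {..<N} \<and> pmatch {0..<Suc N} S \<and> card S = j} = (Suc N - j) choose j"
proof -
  have "inj_on (\<lambda>I. E ` I) (NC N j)"
    by (rule inj_onI) (simp add: inj_image_eq_iff[OF E_inj])
  then show ?thesis unfolding D_eq by (simp add: card_image NC_card)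
qed



theorem mainTheorem1:
  fixes a b :: "'a::comm_ring_1" and m :: nat
  assumes "m \<ge> 1"
  shows "hafnian (2 * m) (T_mat a b) =
    (\<Sum>k = 0..m. (a - b) ^ (m - k) * b ^ k *
       of_nat (fact (m + k) div (fact k * fact (m - k) * 2 ^ k)))"
proof -
  define N where "N = 2*m - 1"
  have nN: "Suc N = 2*m" using assms N_def by simp
  define V where "V = {0..<2*m}"
  define PE where "PE = E ` {..<N}"
  define d where "d = a - b"
  define c where "c e = (if e \<in> PE then d else 0)" for e
  define w where "w S = (if S \<subseteq> PE then d ^ card S * b ^ (m - card S) else 0)" for S
  define D where "D = {S. S \<subseteq> PE \<and> pmatch V S}"
  define F where "F j = of_nat (pmc (2*m - 2*j)) * (d ^ j * b ^ (m - j))" for j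
  have fV: "finite V" unfolding V_def by simp
  have cardV: "card V = 2*m" unfolding V_def by simp
  have fPM: "finite (perfect_matchings V)" using pm_finite[OF fV] .
  have PMsub: "M \<subseteq> Pow V" if "M \<in> perfect_matchings V" for M
    using pm_edge[OF that] by blast
  have fM: "finite M" if "M \<in> perfect_matchings V" for M
    using PMsub[OF that] fV by (meson finite_Pow_iff finite_subset)
  have step1: "hafnian (2*m) (T_mat a b) = (\<Sum>M\<in>perfect_matchings V. \<Sum>S\<in>Pow M. w S)"
    unfolding hafnian_def V_def[symmetric]
  proof (rule sum.cong[OF refl])
    fix M assume M: "M \<in> perfect_matchings V"
    have cM: "card M = m" using pm_card[OF fV M] cardV by simp
    have "(\<Prod>e\<in>M. T_mat a b (Min e) (Max e)) = (\<Prod>e\<in>M. c e + b)"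
    proof (rule prod.cong[OF refl])
      fix e assume "e \<in> M"
      then have "e \<subseteq> {0..<2*m}" "card e = 2" using pm_edge[OF M] unfolding V_def by auto
      then show "T_mat a b (Min e) (Max e) = c e + b"
        unfolding c_def PE_def d_def N_def by (rule T_edge)
    qed
    also have "\<dots> = (\<Sum>S\<in>Pow M. (\<Prod>e\<in>S. c e) * (\<Prod>e\<in>M - S. b))"
      by (rule prod_add[OF fM[OF M]])
    also have "\<dots> = (\<Sum>S\<in>Pow M. w S)"
    proof (rule sum.cong[OF refl])
      fix S assume "S \<in> Pow M"
      then have SM: "S \<subseteq> M" by simp
      have fS: "finite S" using SM fM[OF M] finite_subset by blast
      have p2: "(\<Prod>e\<in>M - S. b) = b ^ (m - card S)"
        using SM fS cM by (simp add: card_Diff_subset)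
      show "(\<Prod>e\<in>S. c e) * (\<Prod>e\<in>M - S. b) = w S"
      proof (cases "S \<subseteq> PE")
        case True
        then have "(\<Prod>e\<in>S. c e) = (\<Prod>e\<in>S. d)" unfolding c_def by (intro prod.cong) auto
        then show ?thesis using True p2 unfolding w_def by simp
      next
        case False
        then obtain e where "e \<in> S" "e \<notin> PE" by blast
        then have "(\<Prod>e\<in>S. c e) = 0" using fS unfolding c_def by (intro prod_zero) auto
        then show ?thesis using False unfolding w_def by simp
      qed
    qed
    finally show "(\<Prod>e\<in>M. T_mat a b (Min e) (Max e)) = (\<Sum>S\<in>Pow M. w S)" .
  qed
  have fPPV: "finite (Pow (Pow V))" using fV by simp
  have step2: "(\<Sum>M\<in>perfect_matchings V. \<Sum>S\<in>Pow M. w S)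
      = (\<Sum>S\<in>Pow (Pow V). of_nat (card {M \<in> perfect_matchings V. S \<subseteq> M}) * w S)"
  proof -
    have "(\<Sum>M\<in>perfect_matchings V. \<Sum>S\<in>Pow M. w S)
        = (\<Sum>M\<in>perfect_matchings V. \<Sum>S\<in>{S. S \<in> Pow (Pow V) \<and> S \<subseteq> M}. w S)"
    proof (rule sum.cong[OF refl])
      fix M assume "M \<in> perfect_matchings V"
      then have "Pow M = {S. S \<in> Pow (Pow V) \<and> S \<subseteq> M}" using PMsub by blast
      then show "(\<Sum>S\<in>Pow M. w S) = (\<Sum>S\<in>{S. S \<in> Pow (Pow V) \<and> S \<subseteq> M}. w S)" by simp
    qed
    also have "\<dots> = (\<Sum>S\<in>Pow (Pow V). \<Sum>M\<in>{M. M \<in> perfect_matchings V \<and> S \<subseteq> M}. w S)"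
      by (rule sum.swap_restrict[OF fPM fPPV])
    also have "\<dots> = (\<Sum>S\<in>Pow (Pow V). of_nat (card {M \<in> perfect_matchings V. S \<subseteq> M}) * w S)"
      by simp
    finally show ?thesis .
  qed
  have DPP: "D \<subseteq> Pow (Pow V)" unfolding D_def pmatch_def by auto
  have fD: "finite D" using DPP fPPV finite_subset by blast
  have step3: "(\<Sum>S\<in>Pow (Pow V). of_nat (card {M \<in> perfect_matchings V. S \<subseteq> M}) * w S)
      = (\<Sum>S\<in>D. of_nat (card {M \<in> perfect_matchings V. S \<subseteq> M}) * w S)"
  proof (rule sum.mono_neutral_right[OF fPPV DPP], rule ballI)
    fix S assume S: "S \<in> Pow (Pow V) - D"
    show "of_nat (card {M \<in> perfect_matchings V. S \<subseteq> M}) * w S = 0"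
    proof (cases "S \<subseteq> PE")
      case False then show ?thesis unfolding w_def by simp
    next
      case True
      then have "\<not> pmatch V S" using S unfolding D_def by blast
      then have "{M \<in> perfect_matchings V. S \<subseteq> M} = {}" using pm_sub_pmatch by blast
      then have "card {M \<in> perfect_matchings V. S \<subseteq> M} = 0" by (simp only: card.empty)
      then show ?thesis by simp
    qed
  qed
  have step4: "(\<Sum>S\<in>D. of_nat (card {M \<in> perfect_matchings V. S \<subseteq> M}) * w S)
      = (\<Sum>S\<in>D. F (card S))"
  proof (rule sum.cong[OF refl])
    fix S assume "S \<in> D"
    then have SPE: "S \<subseteq> PE" and pm: "pmatch V S" unfolding D_def by auto
    have cU: "card (\<Union>S) = 2 * card S" using pmatch_Union_card[OF fV pm] by simp
    have US: "\<Union>S \<subseteq> V" using pm unfolding pmatch_def by blast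
    have "card {M \<in> perfect_matchings V. S \<subseteq> M} = card (perfect_matchings (V - \<Union>S))"
      by (rule pm_ext_card[OF pm])
    also have "\<dots> = pmc (card (V - \<Union>S))" using fV by (simp add: pm_count)
    also have "card (V - \<Union>S) = 2*m - 2 * card S"
      using US fV cU cardV by (simp add: card_Diff_subset finite_subset)
    finally show "of_nat (card {M \<in> perfect_matchings V. S \<subseteq> M}) * w S = F (card S)"
      unfolding w_def F_def using SPE by simp
  qed
  have cardD: "card ` D \<subseteq> {0..m}"
  proof
    fix j assume "j \<in> card ` D"
    then obtain S where "S \<in> D" "j = card S" by blast
    then have pm: "pmatch V S" unfolding D_def by blast
    have "\<Union>S \<subseteq> V" using pm unfolding pmatch_def by blast
    then have "card (\<Union>S) \<le> card V" using fV by (rule card_mono[rotated])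
    then show "j \<in> {0..m}" using pmatch_Union_card[OF fV pm] cardV \<open>j = card S\<close> by simp
  qed
  have step5: "(\<Sum>S\<in>D. F (card S)) = (\<Sum>j=0..m. of_nat ((2*m - j) choose j) * F j)"
  proof -
    have "(\<Sum>S\<in>D. F (card S)) = (\<Sum>j\<in>{0..m}. \<Sum>S\<in>{S. S \<in> D \<and> card S = j}. F (card S))"
      by (rule sum.group[OF fD _ cardD, symmetric]) simp
    also have "\<dots> = (\<Sum>j=0..m. of_nat ((2*m - j) choose j) * F j)"
    proof (rule sum.cong[OF refl])
      fix j assume "j \<in> {0..m}"
      have "{S. S \<in> D \<and> card S = j} = {S. S \<subseteq> E ` {..<N} \<and> pmatch {0..<Suc N} S \<and> card S = j}"
        unfolding D_def PE_def V_def nN by blast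
      then have "card {S. S \<in> D \<and> card S = j} = (2*m - j) choose j"
        using D_card[of N j] nN by simp
      moreover have "(\<Sum>S\<in>{S. S \<in> D \<and> card S = j}. F (card S)) = (\<Sum>S\<in>{S. S \<in> D \<and> card S = j}. F j)"
        by (rule sum.cong) auto
      ultimately show "(\<Sum>S\<in>{S. S \<in> D \<and> card S = j}. F (card S)) = of_nat ((2*m - j) choose j) * F j"
        by simp
    qed
    finally show ?thesis .
  qed
  have rhs: "(\<Sum>k = 0..m. (a - b) ^ (m - k) * b ^ k *
       of_nat (fact (m + k) div (fact k * fact (m - k) * 2 ^ k)))
     = (\<Sum>j=0..m. of_nat ((2*m - j) choose j) * F j)"
  proof -
    have "(\<Sum>k = 0..m. (a - b) ^ (m - k) * b ^ k *
       of_nat (fact (m + k) div (fact k * fact (m - k) * 2 ^ k)))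
      = (\<Sum>j = 0..m. (a - b) ^ (m - (m + 0 - j)) * b ^ (m + 0 - j) *
       of_nat (fact (m + (m + 0 - j)) div (fact (m + 0 - j) * fact (m - (m + 0 - j)) * 2 ^ (m + 0 - j))))"
      by (rule sum.atLeastAtMost_rev)
    also have "\<dots> = (\<Sum>j=0..m. of_nat ((2*m - j) choose j) * F j)"
    proof (rule sum.cong[OF refl])
      fix j assume "j \<in> {0..m}"
      then obtain k where mk: "m = j + k" using le_Suc_ex by auto
      have e1: "m + 0 - j = k" "m - (m + 0 - j) = j" "m + (m + 0 - j) = j + 2*k"
        "2*m - j = j + 2*k" "2*m - 2*j = 2*k" "m - j = k" "m - k = j" "m + k = j + 2*k" using mk by auto
      show "(a - b) ^ (m - (m + 0 - j)) * b ^ (m + 0 - j) *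
       of_nat (fact (m + (m + 0 - j)) div (fact (m + 0 - j) * fact (m - (m + 0 - j)) * 2 ^ (m + 0 - j)))
        = of_nat ((2*m - j) choose j) * F j"
        unfolding F_def d_def by (simp only: e1 coef_eq) (simp add: algebra_simps)
    qed
    finally show ?thesis .
  qed
  show ?thesis using step1 step2 step3 step4 step5 rhs by simp
qed


end
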